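(* Let $n\ge0$, let $\lambda$ be an integer partition with $|\lambda|=k$, and let $f_\lambda$ be the number of standard Young tableaux of shape $\lambda$. Then $$T^{(n)}_{\varnothing,\lambda}=(n+1)!\binom{n}{k}f_\lambda \qquad\text{and}\qquad T^{(n)}_{\lambda,\varnothing}=\frac{(n+1)!}{(k+1)!}\binom{n}{k}f_\lambda.$$
   Context: Young's lattice $\mathcal{Y}$ is the set of integer partitions (Young diagrams) ordered by inclusion of diagrams; $\mu\lessdot\nu$ means $\nu$ is obtained from $\mu$ by adding one cell, and $\nu\gtrdot\mu$ is the same relation reversed; $\varnothing$ is the empty partition. For partitions $\mu,\nu$, $T^{(n)}_{\mu,\nu}$ is the number of sequences $(\lambda^{(0)},\dots,\lambda^{(3n)})\in\mathcal{Y}^{3n+1}$ with $\lambda^{(0)}=\mu$, $\lambda^{(3n)}=\nu$, and such that for $0\le i<3n$: if $i\equiv0$ or $1\pmod 3$ then either $\lambda^{(i)}\lessdot\lambda^{(i+1)}$ or $\lambda^{(i)}=\lambda^{(i+1)}$; if $i\equiv2\pmod3$ then $\lambda^{(i)}\gtrdot\lambda^{(i+1)}$. *)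

theory Defs
  imports Complex_Main
begin

definition is_partition :: "nat list \<Rightarrow> bool" where
  "is_partition lam \<longleftrightarrow> sorted_wrt (\<ge>) lam \<and> 0 \<notin> set lam"

definition psize :: "nat list \<Rightarrow> nat" where
  "psize lam = sum_list lam"

text \<open>Young diagram: cells (row, column), 0-indexed.\<close>
definition cells :: "nat list \<Rightarrow> (nat \<times> nat) set" where
  "cells lam = {(i, j). i < length lam \<and> j < lam ! i}"

definition covers :: "nat list \<Rightarrow> nat list \<Rightarrow> bool" where
  "covers mu nu \<longleftrightarrow> is_partition mu \<and> is_partition nu \<and>
      cells mu \<subseteq> cells nu \<and> card (cells nu - cells mu) = 1"

definition step_ok :: "nat \<Rightarrow> nat list \<Rightarrow> nat list \<Rightarrow> bool" where
  "step_ok i a b \<longleftrightarrow>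
     (if i mod 3 = 2 then covers b a else (covers a b \<or> a = b))"

definition walks :: "nat \<Rightarrow> nat list \<Rightarrow> nat list \<Rightarrow> nat list list set" where
  "walks n mu nu = {ls. length ls = 3 * n + 1 \<and> (\<forall>l\<in>set ls. is_partition l) \<and>
       ls ! 0 = mu \<and> ls ! (3 * n) = nu \<and>
       (\<forall>i < 3 * n. step_ok i (ls ! i) (ls ! Suc i))}"

definition T :: "nat \<Rightarrow> nat list \<Rightarrow> nat list \<Rightarrow> nat" where
  "T n mu nu = card (walks n mu nu)"

definition SYT :: "nat list \<Rightarrow> ((nat \<times> nat) \<Rightarrow> nat) set" where
  "SYT lam = {t. bij_betw t (cells lam) {1..psize lam} \<and>
      (\<forall>c. c \<notin> cells lam \<longrightarrow> t c = 0) \<and>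
      (\<forall>i j. (i, Suc j) \<in> cells lam \<longrightarrow> t (i, j) < t (i, Suc j)) \<and>
      (\<forall>i j. (Suc i, j) \<in> cells lam \<longrightarrow> t (i, j) < t (Suc i, j))}"

definition num_SYT :: "nat list \<Rightarrow> nat" where
  "num_SYT lam = card (SYT lam)"

end

theory Submission
  imports Defs
begin


definition rr :: "nat list \<Rightarrow> nat \<Rightarrow> nat" where
  "rr lam i = (if i < length lam then lam ! i else 0)"

lemma cells_rr: "cells lam = {(i, j). j < rr lam i}"
  unfolding cells_def rr_def by (auto split: if_splits)

lemma part_anti: "is_partition lam \<Longrightarrow> rr lam (Suc i) \<le> rr lam i"
  unfolding is_partition_def rr_def
  by (auto simp: sorted_wrt_iff_nth_less)

lemma part_anti_le: "is_partition lam \<Longrightarrow> i \<le> j \<Longrightarrow> rr lam j \<le> rr lam i"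
  by (rule lift_Suc_antimono_le[of "rr lam"]) (auto simp: part_anti)

lemma part_pos: "is_partition lam \<Longrightarrow> (rr lam i = 0) = (length lam \<le> i)"
proof -
  assume "is_partition lam"
  then have "i < length lam \<Longrightarrow> lam ! i \<noteq> 0" unfolding is_partition_def by (metis nth_mem)
  then show ?thesis unfolding rr_def by auto
qed

lemma rr_inj: assumes "is_partition a" "is_partition b" "rr a = rr b" shows "a = b"
proof -
  have "length a = length b"
  proof (rule ccontr)
    assume "length a \<noteq> length b"
    then consider "length a < length b" | "length b < length a" by linarith
    then show False
    proof cases
      case 1 then show ?thesis using part_pos[OF assms(1), of "length a"] part_pos[OF assms(2), of "length a"] assms(3) by auto
    next
      case 2 then show ?thesis using part_pos[OF assms(1), of "length b"] part_pos[OF assms(2), of "length b"] assms(3) by auto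
    qed
  qed
  moreover have "a ! i = b ! i" if "i < length a" for i
  proof -
    have "rr a i = rr b i" using assms(3) by simp
    then show ?thesis using that \<open>length a = length b\<close> by (simp add: rr_def)
  qed
  ultimately show ?thesis by (simp add: nth_equalityI)
qed

definition toP :: "(nat \<Rightarrow> nat) \<Rightarrow> nat list" where
  "toP r = map r [0..<(LEAST i. r i = 0)]"

definition goodr :: "(nat \<Rightarrow> nat) \<Rightarrow> bool" where
  "goodr r \<longleftrightarrow> (\<forall>i. r (Suc i) \<le> r i) \<and> (\<exists>L. r L = 0)"

lemma goodr_le: "goodr r \<Longrightarrow> i \<le> j \<Longrightarrow> r j \<le> r i"
  unfolding goodr_def by (rule lift_Suc_antimono_le[of r]) auto

lemma toP: assumes "goodr r" shows "is_partition (toP r)" "rr (toP r) = r"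
proof -
  define L where "L = (LEAST i. r i = 0)"
  have L0: "r L = 0" using assms unfolding goodr_def L_def by (auto intro: LeastI)
  have Lpos: "\<And>i. i < L \<Longrightarrow> r i > 0" unfolding L_def using not_less_Least by blast
  have Lge: "\<And>i. L \<le> i \<Longrightarrow> r i = 0" using goodr_le[OF assms, of L] L0 by fastforce
  show "is_partition (toP r)" unfolding is_partition_def toP_def L_def[symmetric]
    using Lpos goodr_le[OF assms]
    by (auto simp: sorted_wrt_iff_nth_less in_set_conv_nth) (metis less_irrefl)
  show "rr (toP r) = r" unfolding toP_def L_def[symmetric] rr_def
    using Lge by (auto simp: fun_eq_iff)
qed

lemma goodr_rr: "is_partition lam \<Longrightarrow> goodr (rr lam)"
  unfolding goodr_def using part_anti part_pos by blast

lemma toP_rr: "is_partition lam \<Longrightarrow> toP (rr lam) = lam"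
  using rr_inj[of "toP (rr lam)" lam] toP[OF goodr_rr] by simp

lemma card_cells: "card (cells lam) = psize lam"
proof -
  have "cells lam = Sigma {..<length lam} (\<lambda>i. {..<lam ! i})" unfolding cells_def by auto
  then have "card (cells lam) = (\<Sum>i<length lam. lam ! i)" by (simp add: card_SigmaI)
  then show ?thesis unfolding psize_def sum_list_sum_nth atLeast0LessThan by simp
qed

lemma cells_Sigma: "cells lam = Sigma {..<length lam} (\<lambda>i. {..<lam ! i})" unfolding cells_def by auto

lemma finite_cells: "finite (cells lam)"
  unfolding cells_Sigma by auto



definition inc :: "(nat \<Rightarrow> nat) \<Rightarrow> nat \<Rightarrow> nat \<Rightarrow> nat" where
  "inc r i = r(i := Suc (r i))"

definition up :: "nat list \<Rightarrow> nat list set" where "up mu = {lam. covers mu lam}"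
definition dn :: "nat list \<Rightarrow> nat list set" where "dn lam = {mu. covers mu lam}"

lemma covers_rr: "covers mu lam \<longleftrightarrow> is_partition mu \<and> is_partition lam \<and> (\<exists>i. rr lam = inc (rr mu) i)"
proof
  assume c: "covers mu lam"
  then have pm: "is_partition mu" and pl: "is_partition lam" and sub: "cells mu \<subseteq> cells lam"
    and c1: "card (cells lam - cells mu) = 1" unfolding covers_def by auto
  have le: "rr mu k \<le> rr lam k" for k
  proof (cases "rr mu k")
    case (Suc m)
    then have "(k, m) \<in> cells mu" unfolding cells_rr by auto
    then have "(k, m) \<in> cells lam" using sub by auto
    then show ?thesis using Suc unfolding cells_rr by auto
  qed auto
  obtain c where cc: "cells lam - cells mu = {c}" using c1 by (rule card_1_singletonE)
  obtain i0 j0 where c0: "c = (i0, j0)" by force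
  have memd: "(k, j) \<in> cells lam - cells mu \<longleftrightarrow> rr mu k \<le> j \<and> j < rr lam k" for k j
    unfolding cells_rr by auto
  have other: "rr lam k = rr mu k" if "k \<noteq> i0" for k
  proof (rule ccontr)
    assume "rr lam k \<noteq> rr mu k"
    then have "rr mu k < rr lam k" using le[of k] by simp
    then have "(k, rr mu k) \<in> cells lam - cells mu" using memd by simp
    then show False using cc c0 that by auto
  qed
  have "(i0, j0) \<in> cells lam - cells mu" using cc c0 by auto
  then have a: "rr mu i0 \<le> j0" "j0 < rr lam i0" using memd by auto
  have b: "rr lam i0 \<le> Suc (rr mu i0)"
  proof (rule ccontr)
    assume "\<not> ?thesis"
    then have "(i0, rr mu i0) \<in> cells lam - cells mu" "(i0, Suc (rr mu i0)) \<in> cells lam - cells mu"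
      using memd by auto
    then show False using cc by auto
  qed
  have "rr lam = inc (rr mu) i0" unfolding inc_def using other a b by (auto simp: fun_eq_iff)
  then show "is_partition mu \<and> is_partition lam \<and> (\<exists>i. rr lam = inc (rr mu) i)" using pm pl by blast
next
  assume "is_partition mu \<and> is_partition lam \<and> (\<exists>i. rr lam = inc (rr mu) i)"
  then obtain i where pm: "is_partition mu" and pl: "is_partition lam" and e: "rr lam = inc (rr mu) i" by blast
  have "cells lam - cells mu = {(i, rr mu i)}" unfolding cells_rr e inc_def by (auto split: if_splits)
  moreover have "cells mu \<subseteq> cells lam" unfolding cells_rr e inc_def by auto
  ultimately show "covers mu lam" unfolding covers_def using pm pl by simp
qed

lemma covers_psize: assumes "covers mu lam" shows "psize lam = Suc (psize mu)"
proof -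
  have "cells mu \<subseteq> cells lam" "card (cells lam - cells mu) = 1" using assms unfolding covers_def by auto
  then have "card (cells lam) = card (cells mu) + 1"
    using card_Diff_subset[OF finite_cells \<open>cells mu \<subseteq> cells lam\<close>]
      card_mono[OF finite_cells \<open>cells mu \<subseteq> cells lam\<close>] by linarith
  then show ?thesis using card_cells by simp
qed

lemma covers_part: "covers mu lam \<Longrightarrow> is_partition mu \<and> is_partition lam"
  unfolding covers_def by auto

lemma goodr_inc: assumes "goodr r" "i = 0 \<or> r i < r (i - 1)" shows "goodr (inc r i)"
proof -
  obtain L where L: "r L = 0" using assms(1) unfolding goodr_def by auto
  define L' where "L' = Suc (max L i)"
  have "r L' = 0" using goodr_le[OF assms(1), of L L'] L unfolding L'_def by simp
  then have z: "inc r i L' = 0" unfolding inc_def L'_def by simp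
  have "inc r i (Suc k) \<le> inc r i k" for k
  proof -
    have m: "r (Suc k) \<le> r k" using assms(1) unfolding goodr_def by auto
    show ?thesis using m assms(2) unfolding inc_def by (cases "Suc k = i"; cases "k = i") auto
  qed
  then show ?thesis unfolding goodr_def using z by blast
qed

lemma goodr_dec': assumes "goodr r" "r (Suc i) < r i" shows "goodr (r(i := r i - 1))"
proof -
  obtain L where L: "r L = 0" using assms(1) unfolding goodr_def by auto
  have z: "(r(i := r i - 1)) L = 0" using L by (cases "L = i") auto
  have "(r(i := r i - 1)) (Suc k) \<le> (r(i := r i - 1)) k" for k
  proof -
    have m: "r (Suc k) \<le> r k" using assms(1) unfolding goodr_def by auto
    show ?thesis using m assms(2) by (cases "Suc k = i"; cases "k = i") auto
  qed
  then show ?thesis unfolding goodr_def using z by blast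
qed

lemma inc_dec: "0 < r i \<Longrightarrow> inc (r(i := r i - 1)) i = r"
  unfolding inc_def by (auto simp: fun_eq_iff)

lemma up_char: assumes "is_partition mu"
  shows "up mu = (\<lambda>i. toP (inc (rr mu) i)) ` {i. i = 0 \<or> rr mu i < rr mu (i - 1)}"
proof (rule equalityI)
  show "up mu \<subseteq> (\<lambda>i. toP (inc (rr mu) i)) ` {i. i = 0 \<or> rr mu i < rr mu (i - 1)}"
  proof
    fix lam assume "lam \<in> up mu"
    then obtain i where pl: "is_partition lam" and e: "rr lam = inc (rr mu) i"
      unfolding up_def covers_rr by auto
    have "i = 0 \<or> rr mu i < rr mu (i - 1)"
    proof (cases i)
      case (Suc k)
      have "rr lam (Suc k) \<le> rr lam k" by (rule part_anti[OF pl])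
      then show ?thesis using e Suc unfolding inc_def by auto
    qed auto
    moreover have "lam = toP (inc (rr mu) i)" using toP_rr[OF pl] e by simp
    ultimately show "lam \<in> (\<lambda>i. toP (inc (rr mu) i)) ` {i. i = 0 \<or> rr mu i < rr mu (i - 1)}" by blast
  qed
next
  show "(\<lambda>i. toP (inc (rr mu) i)) ` {i. i = 0 \<or> rr mu i < rr mu (i - 1)} \<subseteq> up mu"
  proof
    fix lam assume "lam \<in> (\<lambda>i. toP (inc (rr mu) i)) ` {i. i = 0 \<or> rr mu i < rr mu (i - 1)}"
    then obtain i where i: "i = 0 \<or> rr mu i < rr mu (i - 1)" and l: "lam = toP (inc (rr mu) i)" by auto
    have g: "goodr (inc (rr mu) i)" using goodr_inc[OF goodr_rr[OF assms] i] .
    show "lam \<in> up mu" unfolding up_def covers_rr using toP[OF g] l assms by auto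
  qed
qed

lemma dn_char: assumes "is_partition lam"
  shows "dn lam = (\<lambda>i. toP ((rr lam)(i := rr lam i - 1))) ` {i. rr lam (Suc i) < rr lam i}"
proof (rule equalityI)
  show "dn lam \<subseteq> (\<lambda>i. toP ((rr lam)(i := rr lam i - 1))) ` {i. rr lam (Suc i) < rr lam i}"
  proof
    fix mu assume "mu \<in> dn lam"
    then obtain i where pm: "is_partition mu" and e: "rr lam = inc (rr mu) i"
      unfolding dn_def covers_rr by auto
    have "rr mu (Suc i) \<le> rr mu i" by (rule part_anti[OF pm])
    then have "rr lam (Suc i) < rr lam i" using e unfolding inc_def by auto
    moreover have "rr mu = (rr lam)(i := rr lam i - 1)" using e unfolding inc_def by (auto simp: fun_eq_iff)
    then have "mu = toP ((rr lam)(i := rr lam i - 1))" using toP_rr[OF pm] by simp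
    ultimately show "mu \<in> (\<lambda>i. toP ((rr lam)(i := rr lam i - 1))) ` {i. rr lam (Suc i) < rr lam i}" by blast
  qed
next
  show "(\<lambda>i. toP ((rr lam)(i := rr lam i - 1))) ` {i. rr lam (Suc i) < rr lam i} \<subseteq> dn lam"
  proof
    fix mu assume "mu \<in> (\<lambda>i. toP ((rr lam)(i := rr lam i - 1))) ` {i. rr lam (Suc i) < rr lam i}"
    then obtain i where i: "rr lam (Suc i) < rr lam i" and l: "mu = toP ((rr lam)(i := rr lam i - 1))" by auto
    have g: "goodr ((rr lam)(i := rr lam i - 1))" using goodr_dec'[OF goodr_rr[OF assms] i] .
    have "rr lam = inc (rr mu) i" using toP(2)[OF g] l i inc_dec[of "rr lam" i] by simp
    then show "mu \<in> dn lam" unfolding dn_def covers_rr using toP[OF g] l assms by auto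
  qed
qed

lemma Rset_fin: assumes "is_partition lam" shows "{i. rr lam (Suc i) < rr lam i} \<subseteq> {..<length lam}"
proof
  fix i assume "i \<in> {i. rr lam (Suc i) < rr lam i}"
  then have "rr lam i \<noteq> 0" by auto
  then show "i \<in> {..<length lam}" using part_pos[OF assms, of i] by auto
qed

lemma finite_dn: assumes "is_partition lam" shows "finite (dn lam)"
  unfolding dn_char[OF assms] by (rule finite_imageI, rule finite_subset[OF Rset_fin[OF assms]], simp)

lemma Aset_eq: "{i. i = 0 \<or> r i < r (i - 1)} = insert 0 (Suc ` {i. r (Suc i) < r i})"
proof
  show "{i. i = 0 \<or> r i < r (i - 1)} \<subseteq> insert 0 (Suc ` {i. r (Suc i) < r i})"
  proof
    fix x assume "x \<in> {i. i = 0 \<or> r i < r (i - 1)}"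
    then show "x \<in> insert 0 (Suc ` {i. r (Suc i) < r i})" by (cases x) auto
  qed
qed auto

lemma finite_up: assumes "is_partition lam" shows "finite (up lam)"
proof -
  have "finite {i. rr lam (Suc i) < rr lam i}" by (rule finite_subset[OF Rset_fin[OF assms]], simp)
  then show ?thesis unfolding up_char[OF assms] Aset_eq by simp
qed

lemma inj_toP_inc: assumes "is_partition mu"
  shows "inj_on (\<lambda>i. toP (inc (rr mu) i)) {i. i = 0 \<or> rr mu i < rr mu (i - 1)}"
proof
  fix i j assume i: "i \<in> {i. i = 0 \<or> rr mu i < rr mu (i - 1)}" and j: "j \<in> {i. i = 0 \<or> rr mu i < rr mu (i - 1)}"
    and e: "toP (inc (rr mu) i) = toP (inc (rr mu) j)"
  have gi: "rr (toP (inc (rr mu) i)) = inc (rr mu) i"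
    using toP(2)[OF goodr_inc[OF goodr_rr[OF assms], of i]] i by blast
  have gj: "rr (toP (inc (rr mu) j)) = inc (rr mu) j"
    using toP(2)[OF goodr_inc[OF goodr_rr[OF assms], of j]] j by blast
  have "inc (rr mu) i = inc (rr mu) j" using gi gj e by metis
  then have "inc (rr mu) i i = inc (rr mu) j i" by simp
  then show "i = j" unfolding inc_def by (auto split: if_splits)
qed

lemma inj_toP_dec: assumes "is_partition lam"
  shows "inj_on (\<lambda>i. toP ((rr lam)(i := rr lam i - 1))) {i. rr lam (Suc i) < rr lam i}"
proof
  fix i j assume i: "i \<in> {i. rr lam (Suc i) < rr lam i}" and j: "j \<in> {i. rr lam (Suc i) < rr lam i}"
    and e: "toP ((rr lam)(i := rr lam i - 1)) = toP ((rr lam)(j := rr lam j - 1))"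
  have gi: "rr (toP ((rr lam)(i := rr lam i - 1))) = (rr lam)(i := rr lam i - 1)"
    using toP(2)[OF goodr_dec'[OF goodr_rr[OF assms], of i]] i by blast
  have gj: "rr (toP ((rr lam)(j := rr lam j - 1))) = (rr lam)(j := rr lam j - 1)"
    using toP(2)[OF goodr_dec'[OF goodr_rr[OF assms], of j]] j by blast
  have "(rr lam)(i := rr lam i - 1) = (rr lam)(j := rr lam j - 1)" using gi gj e by metis
  then have "((rr lam)(i := rr lam i - 1)) i = ((rr lam)(j := rr lam j - 1)) i" by simp
  then show "i = j" using i by (auto split: if_splits)
qed

lemma card_up_dn: assumes "is_partition mu" shows "card (up mu) = Suc (card (dn mu))"
proof -
  have f: "finite {i. rr mu (Suc i) < rr mu i}" by (rule finite_subset[OF Rset_fin[OF assms]], simp)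
  have "card (up mu) = card {i. i = 0 \<or> rr mu i < rr mu (i - 1)}"
    unfolding up_char[OF assms] by (rule card_image[OF inj_toP_inc[OF assms]])
  also have "\<dots> = Suc (card {i. rr mu (Suc i) < rr mu i})"
    unfolding Aset_eq using f by (simp add: card_image)
  also have "card {i. rr mu (Suc i) < rr mu i} = card (dn mu)"
    unfolding dn_char[OF assms] by (rule card_image[OF inj_toP_dec[OF assms], symmetric])
  finally show ?thesis .
qed



lemma inc_inc:
  assumes e: "inc r1 i = inc r2 j" and ij: "i \<noteq> j"
  shows "r2 = inc (\<lambda>k. min (r1 k) (r2 k)) i" "r1 = inc (\<lambda>k. min (r1 k) (r2 k)) j"
    "inc r1 i = (\<lambda>k. max (r1 k) (r2 k))"
proof -
  have a: "(if k = i then Suc (r1 i) else r1 k) = (if k = j then Suc (r2 j) else r2 k)" for k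
    using fun_cong[OF e, of k] unfolding inc_def by simp
  have ai: "r2 i = Suc (r1 i)" using a[of i] ij by simp
  have aj: "r1 j = Suc (r2 j)" using a[of j] ij by simp
  have ak: "k \<noteq> i \<Longrightarrow> k \<noteq> j \<Longrightarrow> r1 k = r2 k" for k using a[of k] by simp
  show "r2 = inc (\<lambda>k. min (r1 k) (r2 k)) i" unfolding inc_def
  proof
    fix k show "r2 k = ((\<lambda>k. min (r1 k) (r2 k))(i := Suc (min (r1 i) (r2 i)))) k"
      using ai aj ak[of k] ij by (cases "k = i"; cases "k = j") auto
  qed
  show "r1 = inc (\<lambda>k. min (r1 k) (r2 k)) j" unfolding inc_def
  proof
    fix k show "r1 k = ((\<lambda>k. min (r1 k) (r2 k))(j := Suc (min (r1 j) (r2 j)))) k"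
      using ai aj ak[of k] ij by (cases "k = i"; cases "k = j") auto
  qed
  show "inc r1 i = (\<lambda>k. max (r1 k) (r2 k))" unfolding inc_def
  proof
    fix k show "(r1(i := Suc (r1 i))) k = max (r1 k) (r2 k)"
      using ai aj ak[of k] ij by (cases "k = i"; cases "k = j") auto
  qed
qed

lemma inc_inc2:
  assumes e1: "r1 = inc s i" and e2: "r2 = inc s j" and ij: "i \<noteq> j"
  shows "inc r1 j = (\<lambda>k. max (r1 k) (r2 k))" "inc r2 i = (\<lambda>k. max (r1 k) (r2 k))"
proof -
  show "inc r1 j = (\<lambda>k. max (r1 k) (r2 k))" unfolding inc_def e1 e2
  proof
    fix k show "((s(i := Suc (s i)))(j := Suc ((s(i := Suc (s i))) j))) k =
          max ((s(i := Suc (s i))) k) ((s(j := Suc (s j))) k)"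
      using ij by (cases "k = i"; cases "k = j") auto
  qed
  show "inc r2 i = (\<lambda>k. max (r1 k) (r2 k))" unfolding inc_def e1 e2
  proof
    fix k show "((s(j := Suc (s j)))(i := Suc ((s(j := Suc (s j))) i))) k =
          max ((s(i := Suc (s i))) k) ((s(j := Suc (s j))) k)"
      using ij by (cases "k = i"; cases "k = j") auto
  qed
qed

lemma inc_same: "inc r1 i = inc r2 i \<Longrightarrow> r1 = r2"
proof
  fix k assume "inc r1 i = inc r2 i"
  then have "inc r1 i k = inc r2 i k" by simp
  then show "r1 k = r2 k" unfolding inc_def by (cases "k = i") auto
qed

lemma goodr_min: "goodr r1 \<Longrightarrow> goodr r2 \<Longrightarrow> goodr (\<lambda>k. min (r1 k) (r2 k))"
proof -
  assume a: "goodr r1" "goodr r2"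
  obtain L1 where "r1 L1 = 0" using a unfolding goodr_def by auto
  then have "min (r1 L1) (r2 L1) = 0" by simp
  moreover have "min (r1 (Suc k)) (r2 (Suc k)) \<le> min (r1 k) (r2 k)" for k
    using a unfolding goodr_def by (meson min.mono)
  ultimately show ?thesis unfolding goodr_def by blast
qed

lemma goodr_max: assumes "goodr r1" "goodr r2" shows "goodr (\<lambda>k. max (r1 k) (r2 k))"
proof -
  obtain L1 L2 where z: "r1 L1 = 0" "r2 L2 = 0" using assms unfolding goodr_def by auto
  have z1: "r1 (max L1 L2) = 0" using goodr_le[OF assms(1), of L1 "max L1 L2"] z by auto
  have z2: "r2 (max L1 L2) = 0" using goodr_le[OF assms(2), of L2 "max L1 L2"] z by auto
  have m: "max (r1 (Suc k)) (r2 (Suc k)) \<le> max (r1 k) (r2 k)" for k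
    using assms unfolding goodr_def by (meson max.mono)
  have "max (r1 (max L1 L2)) (r2 (max L1 L2)) = 0" using z1 z2 by simp
  then show ?thesis unfolding goodr_def using m by blast
qed

lemma two_up:
  assumes "covers mu lam" "covers rho lam" "mu \<noteq> rho"
  obtains i j where "i \<noteq> j" "rr lam = inc (rr mu) i" "rr lam = inc (rr rho) j"
proof -
  obtain i j where pm: "is_partition mu" and pr: "is_partition rho" and
    ei: "rr lam = inc (rr mu) i" and ej: "rr lam = inc (rr rho) j"
    using assms(1,2) unfolding covers_rr by blast
  have "i \<noteq> j"
  proof
    assume "i = j"
    then have "inc (rr mu) i = inc (rr rho) i" using ei ej by simp
    then have "rr mu = rr rho" by (rule inc_same)
    then show False using rr_inj[OF pm pr] assms(3) by blast
  qed
  then show ?thesis using that ei ej by blast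
qed

lemma two_dn:
  assumes "covers sig mu" "covers sig rho" "mu \<noteq> rho"
  obtains i j where "i \<noteq> j" "rr mu = inc (rr sig) i" "rr rho = inc (rr sig) j"
proof -
  obtain i j where pm: "is_partition mu" and pr: "is_partition rho" and
    ei: "rr mu = inc (rr sig) i" and ej: "rr rho = inc (rr sig) j"
    using assms(1,2) unfolding covers_rr by blast
  have "i \<noteq> j"
  proof
    assume "i = j"
    then have "rr mu = rr rho" using ei ej by simp
    then show False using rr_inj[OF pm pr] assms(3) by blast
  qed
  then show ?thesis using that ei ej by blast
qed

lemma card_le1: "A \<subseteq> {a} \<Longrightarrow> A \<noteq> {} \<Longrightarrow> card A = 1"
  by (drule subset_singletonD) auto

lemma DU_off:
  assumes pm: "is_partition mu" and pr: "is_partition rho" and ne: "mu \<noteq> rho"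
  shows "card (up mu \<inter> up rho) = card (dn mu \<inter> dn rho)"
proof -
  define M where "M = toP (\<lambda>k. max (rr mu k) (rr rho k))"
  define N where "N = toP (\<lambda>k. min (rr mu k) (rr rho k))"
  have gM: "goodr (\<lambda>k. max (rr mu k) (rr rho k))" by (rule goodr_max[OF goodr_rr[OF pm] goodr_rr[OF pr]])
  have gN: "goodr (\<lambda>k. min (rr mu k) (rr rho k))" by (rule goodr_min[OF goodr_rr[OF pm] goodr_rr[OF pr]])
  have U1: "up mu \<inter> up rho \<subseteq> {M}"
  proof
    fix lam assume "lam \<in> up mu \<inter> up rho"
    then have c1: "covers mu lam" and c2: "covers rho lam" unfolding up_def by auto
    obtain i j where ij: "i \<noteq> j" "rr lam = inc (rr mu) i" "rr lam = inc (rr rho) j"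
      using two_up[OF c1 c2 ne] by blast
    have e: "inc (rr mu) i = inc (rr rho) j" using ij by simp
    have r: "rr lam = (\<lambda>k. max (rr mu k) (rr rho k))" using inc_inc(3)[OF e ij(1)] ij(2) by simp
    have "lam = M" unfolding M_def r[symmetric] using toP_rr covers_part[OF c1] by simp
    then show "lam \<in> {M}" by simp
  qed
  have D1: "dn mu \<inter> dn rho \<subseteq> {N}"
  proof
    fix sig assume "sig \<in> dn mu \<inter> dn rho"
    then have c1: "covers sig mu" and c2: "covers sig rho" unfolding dn_def by auto
    obtain i j where ij: "i \<noteq> j" "rr mu = inc (rr sig) i" "rr rho = inc (rr sig) j"
      using two_dn[OF c1 c2 ne] by blast
    have e: "inc (rr mu) j = inc (rr rho) i" using inc_inc2[OF ij(2,3,1)] by simp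
    have "rr mu = inc (\<lambda>k. min (rr mu k) (rr rho k)) i" using inc_inc(2)[OF e] ij(1) by simp
    then have "inc (rr sig) i = inc (\<lambda>k. min (rr mu k) (rr rho k)) i" using ij(2) by simp
    then have r: "rr sig = (\<lambda>k. min (rr mu k) (rr rho k))" by (rule inc_same)
    have "sig = N" unfolding N_def r[symmetric] using toP_rr covers_part[OF c1] by simp
    then show "sig \<in> {N}" by simp
  qed
  have iff: "up mu \<inter> up rho \<noteq> {} \<longleftrightarrow> dn mu \<inter> dn rho \<noteq> {}"
  proof
    assume "up mu \<inter> up rho \<noteq> {}"
    then obtain lam where "lam \<in> up mu \<inter> up rho" by blast
    then have c1: "covers mu lam" and c2: "covers rho lam" unfolding up_def by auto
    obtain i j where ij: "i \<noteq> j" "rr lam = inc (rr mu) i" "rr lam = inc (rr rho) j"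
      using two_up[OF c1 c2 ne] by blast
    have e: "inc (rr mu) i = inc (rr rho) j" using ij by simp
    have rN: "rr N = (\<lambda>k. min (rr mu k) (rr rho k))" unfolding N_def using toP(2)[OF gN] .
    have pN: "is_partition N" unfolding N_def using toP(1)[OF gN] .
    have "covers N mu" unfolding covers_rr using pN pm rN inc_inc(2)[OF e ij(1)] by auto
    moreover have "covers N rho" unfolding covers_rr using pN pr rN inc_inc(1)[OF e ij(1)] by auto
    ultimately show "dn mu \<inter> dn rho \<noteq> {}" unfolding dn_def by blast
  next
    assume "dn mu \<inter> dn rho \<noteq> {}"
    then obtain sig where "sig \<in> dn mu \<inter> dn rho" by blast
    then have c1: "covers sig mu" and c2: "covers sig rho" unfolding dn_def by auto
    obtain i j where ij: "i \<noteq> j" "rr mu = inc (rr sig) i" "rr rho = inc (rr sig) j"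
      using two_dn[OF c1 c2 ne] by blast
    have rM: "rr M = (\<lambda>k. max (rr mu k) (rr rho k))" unfolding M_def using toP(2)[OF gM] .
    have pM: "is_partition M" unfolding M_def using toP(1)[OF gM] .
    have "covers mu M" unfolding covers_rr using pM pm rM inc_inc2(1)[OF ij(2,3,1)] by (metis (no_types))
    moreover have "covers rho M" unfolding covers_rr using pM pr rM inc_inc2(2)[OF ij(2,3,1)] by (metis (no_types))
    ultimately show "up mu \<inter> up rho \<noteq> {}" unfolding up_def by blast
  qed
  show ?thesis
  proof (cases "up mu \<inter> up rho = {}")
    case True
    then show ?thesis using iff by simp
  next
    case False
    then show ?thesis using iff card_le1[OF U1] card_le1[OF D1] by simp
  qed
qed

lemma dn_nil: "dn [] = {}"
  unfolding dn_def using covers_psize by (fastforce simp: psize_def)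

lemma psize0: "is_partition lam \<Longrightarrow> psize lam = 0 \<longleftrightarrow> lam = []"
  unfolding is_partition_def psize_def by (cases lam) (auto simp: sum_list_eq_0_iff)



lemma cells_left: "(i, Suc j) \<in> cells lam \<Longrightarrow> (i, j) \<in> cells lam"
  unfolding cells_def by auto

lemma cells_up: "is_partition lam \<Longrightarrow> (Suc i, j) \<in> cells lam \<Longrightarrow> (i, j) \<in> cells lam"
  unfolding cells_rr using part_anti[of lam i] by auto

lemma cells_inj: assumes "is_partition a" "is_partition b" "cells a = cells b" shows "a = b"
proof -
  have "rr a i = rr b i" for i
  proof -
    have "j < rr a i \<longleftrightarrow> j < rr b i" for j using assms(3) unfolding cells_rr by blast
    then show ?thesis by (meson linorder_neqE_nat less_irrefl)
  qed
  then show ?thesis using rr_inj[OF assms(1,2)] by auto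
qed

lemma cover_diff: assumes "rr lam = inc (rr mu) i" shows "cells lam - cells mu = {(i, rr mu i)}"
  "cells lam = insert (i, rr mu i) (cells mu)" "(i, rr mu i) \<notin> cells mu"
  unfolding cells_rr assms inc_def by (auto split: if_splits)

lemma finite_SYT: "finite (SYT lam)"
proof -
  have "SYT lam \<subseteq> {f. \<forall>x. (x \<in> cells lam \<longrightarrow> f x \<in> {1..psize lam}) \<and> (x \<notin> cells lam \<longrightarrow> f x = 0)}"
    unfolding SYT_def bij_betw_def by auto
  moreover have "finite {f. \<forall>x. (x \<in> cells lam \<longrightarrow> f x \<in> {1..psize lam}) \<and> (x \<notin> cells lam \<longrightarrow> f x = (0::nat))}"
    by (rule finite_set_of_finite_funs[OF finite_cells]) simp
  ultimately show ?thesis by (rule finite_subset)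
qed

lemma SYT_nil: "num_SYT [] = 1"
proof -
  have "cells [] = {}" unfolding cells_def by simp
  then have "SYT [] = {\<lambda>_. 0}" unfolding SYT_def psize_def by (auto simp: fun_eq_iff bij_betw_def)
  then show ?thesis unfolding num_SYT_def by simp
qed

lemma SYT_remove:
  assumes pl: "is_partition lam" and c: "covers mu lam" and e: "rr lam = inc (rr mu) i"
  defines "cc \<equiv> (i, rr mu i)"
  shows "bij_betw (\<lambda>t. t(cc := 0)) {t \<in> SYT lam. t cc = psize lam} (SYT mu)"
proof -
  have pm: "is_partition mu" using c covers_part by blast
  have ks: "psize lam = Suc (psize mu)" using covers_psize[OF c] .
  define k where "k = psize lam"
  have cl: "cells lam = insert cc (cells mu)" and cm: "cc \<notin> cells mu"
    using cover_diff[OF e] unfolding cc_def by auto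
  show ?thesis
  proof (rule bij_betw_byWitness[where f' = "\<lambda>t. t(cc := k)"])
    show "\<forall>t\<in>{t \<in> SYT lam. t cc = psize lam}. (t(cc := 0))(cc := k) = t"
      unfolding k_def by auto
    show "\<forall>t\<in>SYT mu. (t(cc := k))(cc := 0) = t"
      using cm unfolding SYT_def by (auto simp: fun_eq_iff)
    show "(\<lambda>t. t(cc := 0)) ` {t \<in> SYT lam. t cc = psize lam} \<subseteq> SYT mu"
    proof
      fix t' assume "t' \<in> (\<lambda>t. t(cc := 0)) ` {t \<in> SYT lam. t cc = psize lam}"
      then obtain t where t: "t \<in> SYT lam" "t cc = k" and t': "t' = t(cc := 0)" unfolding k_def by auto
      have b: "bij_betw t (cells lam) {1..k}" and z: "\<forall>c. c \<notin> cells lam \<longrightarrow> t c = 0"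
        and r: "\<forall>i j. (i, Suc j) \<in> cells lam \<longrightarrow> t (i, j) < t (i, Suc j)"
        and co: "\<forall>i j. (Suc i, j) \<in> cells lam \<longrightarrow> t (i, j) < t (Suc i, j)"
        using t(1) unfolding SYT_def k_def by auto
      have inj: "inj_on t (cells lam)" using b by (simp add: bij_betw_def)
      have "t ` cells mu = t ` (cells lam - {cc})" using cl cm by simp
      also have "\<dots> = t ` cells lam - t ` {cc}" using inj by (rule inj_on_image_set_diff) (use cl in auto)
      also have "\<dots> = {1..psize mu}" using b t(2) ks unfolding k_def by (auto simp: bij_betw_def)
      finally have im0: "t ` cells mu = {1..psize mu}" .
      have "\<And>x. x \<in> cells mu \<Longrightarrow> t' x = t x" using cm unfolding t' by auto
      then have "t' ` cells mu = t ` cells mu" by (rule image_cong[OF refl])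
      then have im: "t' ` cells mu = {1..psize mu}" using im0 by simp
      have bm: "bij_betw t' (cells mu) {1..psize mu}" unfolding bij_betw_def
        using im inj cl cm unfolding t' by (auto intro: inj_on_subset simp: inj_on_def)
      have zm: "\<forall>c. c \<notin> cells mu \<longrightarrow> t' c = 0" using z cl unfolding t' by auto
      have rm: "\<forall>i j. (i, Suc j) \<in> cells mu \<longrightarrow> t' (i, j) < t' (i, Suc j)"
      proof (intro allI impI)
        fix i j assume "(i, Suc j) \<in> cells mu"
        moreover then have "(i, j) \<in> cells mu" by (rule cells_left)
        ultimately show "t' (i, j) < t' (i, Suc j)" using r cl cm unfolding t' by (auto split: if_splits)
      qed
      have cm': "\<forall>i j. (Suc i, j) \<in> cells mu \<longrightarrow> t' (i, j) < t' (Suc i, j)"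
      proof (intro allI impI)
        fix i j assume "(Suc i, j) \<in> cells mu"
        moreover then have "(i, j) \<in> cells mu" by (rule cells_up[OF pm])
        ultimately show "t' (i, j) < t' (Suc i, j)" using co cl cm unfolding t' by (auto split: if_splits)
      qed
      show "t' \<in> SYT mu" unfolding SYT_def using bm zm rm cm' by blast
    qed
    show "(\<lambda>t. t(cc := k)) ` SYT mu \<subseteq> {t \<in> SYT lam. t cc = psize lam}"
    proof
      fix t assume "t \<in> (\<lambda>t. t(cc := k)) ` SYT mu"
      then obtain t' where t': "t' \<in> SYT mu" and t: "t = t'(cc := k)" by auto
      have b: "bij_betw t' (cells mu) {1..psize mu}" and z: "\<forall>c. c \<notin> cells mu \<longrightarrow> t' c = 0"
        and r: "\<forall>i j. (i, Suc j) \<in> cells mu \<longrightarrow> t' (i, j) < t' (i, Suc j)"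
        and co: "\<forall>i j. (Suc i, j) \<in> cells mu \<longrightarrow> t' (i, j) < t' (Suc i, j)"
        using t' unfolding SYT_def by auto
      have rng: "c \<in> cells mu \<Longrightarrow> t' c < k" for c
      proof -
        assume "c \<in> cells mu"
        then have "t' c \<in> t' ` cells mu" by (rule imageI)
        then show ?thesis using b ks unfolding k_def bij_betw_def by auto
      qed
      have im: "t ` cells lam = {1..k}"
      proof -
        have "t ` cells lam = insert k (t' ` cells mu)" unfolding t cl using cm by auto
        also have "\<dots> = {1..k}" using b ks unfolding k_def bij_betw_def by auto
        finally show ?thesis .
      qed
      have inj: "inj_on t (cells lam)"
      proof -
        have "inj_on t' (cells mu)" using b by (simp add: bij_betw_def)
        then have "inj_on t (cells mu)" unfolding t using cm by (auto simp: inj_on_def)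
        moreover have "k \<notin> t ` cells mu" using rng cm unfolding t by auto
        moreover have "t cc = k" unfolding t by simp
        ultimately show ?thesis unfolding cl using cm by simp
      qed
      have bl: "bij_betw t (cells lam) {1..psize lam}" using im inj unfolding k_def bij_betw_def by simp
      have zl: "\<forall>c. c \<notin> cells lam \<longrightarrow> t c = 0" using z cl unfolding t by auto
      have rl: "\<forall>i j. (i, Suc j) \<in> cells lam \<longrightarrow> t (i, j) < t (i, Suc j)"
      proof (intro allI impI)
        fix i j assume a: "(i, Suc j) \<in> cells lam"
        then have a2: "(i, j) \<in> cells lam" by (rule cells_left)
        show "t (i, j) < t (i, Suc j)"
        proof (cases "(i, Suc j) = cc")
          case True
          then have "(i, j) \<noteq> cc" by auto
          then have "(i, j) \<in> cells mu" using a2 cl by auto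
          then show ?thesis using True rng unfolding t by auto
        next
          case False
          then have m: "(i, Suc j) \<in> cells mu" using a cl by auto
          then have "(i, j) \<in> cells mu" by (rule cells_left)
          then show ?thesis using r m cm unfolding t by (auto split: if_splits)
        qed
      qed
      have cl': "\<forall>i j. (Suc i, j) \<in> cells lam \<longrightarrow> t (i, j) < t (Suc i, j)"
      proof (intro allI impI)
        fix i j assume a: "(Suc i, j) \<in> cells lam"
        then have a2: "(i, j) \<in> cells lam" by (rule cells_up[OF pl])
        show "t (i, j) < t (Suc i, j)"
        proof (cases "(Suc i, j) = cc")
          case True
          then have "(i, j) \<noteq> cc" by auto
          then have "(i, j) \<in> cells mu" using a2 cl by auto
          then show ?thesis using True rng unfolding t by auto
        next
          case False
          then have m: "(Suc i, j) \<in> cells mu" using a cl by auto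
          then have "(i, j) \<in> cells mu" by (rule cells_up[OF pm])
          then show ?thesis using co m cm unfolding t by (auto split: if_splits)
        qed
      qed
      have "t \<in> SYT lam" unfolding SYT_def using bl zl rl cl' by blast
      moreover have "t cc = psize lam" unfolding t k_def by simp
      ultimately show "t \<in> {t \<in> SYT lam. t cc = psize lam}" by blast
    qed
  qed
qed



definition dc :: "nat list \<Rightarrow> nat list \<Rightarrow> nat \<times> nat" where
  "dc lam mu = (THE c. cells lam - cells mu = {c})"

lemma dc_prop1: assumes "mu \<in> dn lam"
  shows "\<exists>i. rr lam = inc (rr mu) i \<and> dc lam mu = (i, rr mu i)"
proof -
  obtain i where e: "rr lam = inc (rr mu) i" using assms unfolding dn_def covers_rr by blast
  have d: "cells lam - cells mu = {(i, rr mu i)}" using cover_diff[OF e] by simp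
  then have "dc lam mu = (i, rr mu i)" unfolding dc_def by auto
  then show ?thesis using e by blast
qed

lemma dc_prop2: assumes "mu \<in> dn lam"
  shows "cells lam - cells mu = {dc lam mu}"
proof -
  obtain i where e: "rr lam = inc (rr mu) i" using assms unfolding dn_def covers_rr by blast
  have d: "cells lam - cells mu = {(i, rr mu i)}" using cover_diff[OF e] by simp
  then have "dc lam mu = (i, rr mu i)" unfolding dc_def by auto
  then show ?thesis using d by simp
qed

lemma SYT_rec: assumes pl: "is_partition lam" and ne: "lam \<noteq> []"
  shows "num_SYT lam = (\<Sum>mu\<in>dn lam. num_SYT mu)"
proof -
  define k where "k = psize lam"
  have k1: "k \<ge> 1" using psize0[OF pl] ne unfolding k_def by simp
  define G where "G mu = {t \<in> SYT lam. t (dc lam mu) = k}" for mu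
  have cardG: "card (G mu) = num_SYT mu" if mdn: "mu \<in> dn lam" for mu
  proof -
    obtain i where e: "rr lam = inc (rr mu) i" "dc lam mu = (i, rr mu i)" using dc_prop1[OF mdn] by blast
    have c: "covers mu lam" using mdn unfolding dn_def by simp
    show ?thesis unfolding num_SYT_def G_def k_def e(2)
      using bij_betw_same_card[OF SYT_remove[OF pl c e(1)]] .
  qed
  have U: "SYT lam = (\<Union>mu\<in>dn lam. G mu)"
  proof (rule equalityI)
    show "SYT lam \<subseteq> (\<Union>mu\<in>dn lam. G mu)"
    proof
      fix t assume t: "t \<in> SYT lam"
      have b: "bij_betw t (cells lam) {1..k}" 
        and r: "\<forall>i j. (i, Suc j) \<in> cells lam \<longrightarrow> t (i, j) < t (i, Suc j)"
        and co: "\<forall>i j. (Suc i, j) \<in> cells lam \<longrightarrow> t (i, j) < t (Suc i, j)"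
        using t unfolding SYT_def k_def by auto
      have rng: "c \<in> cells lam \<Longrightarrow> t c \<le> k" for c
      proof -
        assume "c \<in> cells lam"
        then have "t c \<in> t ` cells lam" by (rule imageI)
        then show ?thesis using b unfolding bij_betw_def by auto
      qed
      have "k \<in> t ` cells lam" using b k1 unfolding bij_betw_def by auto
      then obtain i j where ij: "(i, j) \<in> cells lam" "t (i, j) = k" by auto
      have a1: "j < rr lam i" using ij(1) unfolding cells_rr by simp
      have a2: "\<not> Suc j < rr lam i"
      proof
        assume "Suc j < rr lam i"
        then have "(i, Suc j) \<in> cells lam" unfolding cells_rr by simp
        then have "t (i, j) < t (i, Suc j)" "t (i, Suc j) \<le> k" using r rng[of "(i, Suc j)"] by auto
        then show False using ij(2) by simp
      qed
      have a3: "\<not> j < rr lam (Suc i)"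
      proof
        assume "j < rr lam (Suc i)"
        then have "(Suc i, j) \<in> cells lam" unfolding cells_rr by simp
        then have "t (i, j) < t (Suc i, j)" "t (Suc i, j) \<le> k" using co rng[of "(Suc i, j)"] by auto
        then show False using ij(2) by simp
      qed
      have ri: "rr lam i = Suc j" using a1 a2 by simp
      have R: "rr lam (Suc i) < rr lam i" using a3 ri by simp
      define mu where "mu = toP ((rr lam)(i := rr lam i - 1))"
      have mdn: "mu \<in> dn lam" unfolding dn_char[OF pl] mu_def using R by blast
      have rmu: "rr mu = (rr lam)(i := rr lam i - 1)" unfolding mu_def
        by (rule toP(2)[OF goodr_dec'[OF goodr_rr[OF pl] R]])
      have e3: "cells lam - cells mu = {dc lam mu}" using dc_prop2[OF mdn] .
      have "inc (rr mu) i = rr lam" unfolding rmu by (rule inc_dec) (simp add: ri)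
      then have "cells lam - cells mu = {(i, rr mu i)}"
        using cover_diff(1)[of lam mu i] by simp
      moreover have "rr mu i = j" unfolding rmu using ri by simp
      ultimately have "dc lam mu = (i, j)" using e3 by simp
      then have "t \<in> G mu" unfolding G_def using t ij(2) by simp
      then show "t \<in> (\<Union>mu\<in>dn lam. G mu)" using mdn by blast
    qed
    show "(\<Union>mu\<in>dn lam. G mu) \<subseteq> SYT lam" unfolding G_def by blast
  qed
  have disj: "G m1 \<inter> G m2 = {}" if m: "m1 \<in> dn lam" "m2 \<in> dn lam" "m1 \<noteq> m2" for m1 m2
  proof (rule ccontr)
    assume "G m1 \<inter> G m2 \<noteq> {}"
    then obtain t where t: "t \<in> SYT lam" "t (dc lam m1) = k" "t (dc lam m2) = k" unfolding G_def by auto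
    have inj: "inj_on t (cells lam)" using t(1) unfolding SYT_def bij_betw_def by auto
    have d1: "cells lam - cells m1 = {dc lam m1}" using dc_prop2[OF m(1)] .
    have d2: "cells lam - cells m2 = {dc lam m2}" using dc_prop2[OF m(2)] .
    have i1: "dc lam m1 \<in> cells lam" using d1 by blast
    have i2: "dc lam m2 \<in> cells lam" using d2 by blast
    have "dc lam m1 = dc lam m2" using inj_onD[OF inj _ i1 i2] t(2,3) by simp
    moreover have s1: "cells m1 \<subseteq> cells lam" and s2: "cells m2 \<subseteq> cells lam"
      using m(1,2) unfolding dn_def covers_def by auto
    ultimately have "cells m1 = cells m2" using d1 d2 by (metis Diff_Diff_Int inf.absorb2)
    moreover have "is_partition m1" "is_partition m2" using m(1,2) unfolding dn_def covers_def by auto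
    ultimately show False using cells_inj m(3) by blast
  qed
  have "num_SYT lam = card (\<Union>mu\<in>dn lam. G mu)" unfolding num_SYT_def using U by simp
  also have "\<dots> = (\<Sum>mu\<in>dn lam. card (G mu))"
  proof (rule card_UN_disjoint)
    show "finite (dn lam)" by (rule finite_dn[OF pl])
    show "\<forall>i\<in>dn lam. finite (G i)" unfolding G_def using finite_SYT by simp
    show "\<forall>i\<in>dn lam. \<forall>j\<in>dn lam. i \<noteq> j \<longrightarrow> G i \<inter> G j = {}" using disj by blast
  qed
  also have "\<dots> = (\<Sum>mu\<in>dn lam. num_SYT mu)" using cardG by simp
  finally show ?thesis .
qed



lemma dsum:
  fixes g :: "'b \<Rightarrow> nat"
  assumes fI: "finite I" and fU: "finite U" and sub: "\<forall>i\<in>I. B i \<subseteq> U"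
  shows "(\<Sum>i\<in>I. \<Sum>j\<in>B i. g j) = (\<Sum>j\<in>U. g j * card {i\<in>I. j \<in> B i})"
proof -
  have "(\<Sum>i\<in>I. \<Sum>j\<in>B i. g j) = (\<Sum>i\<in>I. \<Sum>j\<in>U. if j \<in> B i then g j else 0)"
  proof (rule sum.cong[OF refl])
    fix i assume "i \<in> I"
    then have "U \<inter> B i = B i" using sub by blast
    then show "(\<Sum>j\<in>B i. g j) = (\<Sum>j\<in>U. if j \<in> B i then g j else 0)"
      using sum.inter_restrict[OF fU, of g "B i"] by simp
  qed
  also have "\<dots> = (\<Sum>j\<in>U. \<Sum>i\<in>I. if j \<in> B i then g j else 0)" by (rule sum.swap)
  also have "\<dots> = (\<Sum>j\<in>U. g j * card {i\<in>I. j \<in> B i})"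
  proof (rule sum.cong[OF refl])
    fix j
    have "(\<Sum>i\<in>I. if j \<in> B i then g j else 0) = (\<Sum>i\<in>I \<inter> {i. j \<in> B i}. g j)"
      using sum.inter_restrict[OF fI, of "\<lambda>_. g j" "{i. j \<in> B i}"] by (simp add: Int_def)
    also have "\<dots> = g j * card {i\<in>I. j \<in> B i}" by (simp add: Int_def)
    finally show "(\<Sum>i\<in>I. if j \<in> B i then g j else 0) = g j * card {i\<in>I. j \<in> B i}" .
  qed
  finally show ?thesis .
qed

lemma up_psize: "lam \<in> up mu \<Longrightarrow> psize lam = Suc (psize mu)"
  unfolding up_def using covers_psize by simp

lemma dn_psize: "mu \<in> dn lam \<Longrightarrow> psize lam = Suc (psize mu)"
  unfolding dn_def using covers_psize by simp

lemma up_part: "lam \<in> up mu \<Longrightarrow> is_partition lam"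
  unfolding up_def using covers_part by blast

lemma dn_part: "mu \<in> dn lam \<Longrightarrow> is_partition mu"
  unfolding dn_def using covers_part by blast

lemma SYT_rec': assumes "is_partition lam"
  shows "(\<Sum>mu\<in>dn lam. num_SYT mu) = (if psize lam = 0 then 0 else num_SYT lam)"
proof (cases "lam = []")
  case True then show ?thesis by (simp add: dn_nil psize_def)
next
  case False then show ?thesis using SYT_rec[OF assms False] psize0[OF assms] by simp
qed

lemma up_sum: assumes "is_partition mu"
  shows "(\<Sum>lam\<in>up mu. num_SYT lam) = Suc (psize mu) * num_SYT mu"
  using assms
proof (induction "psize mu" arbitrary: mu rule: less_induct)
  case less
  note pm = less.prems
  let ?f = num_SYT
  define U where "U = (\<Union>lam\<in>up mu. dn lam) \<union> (\<Union>sig\<in>dn mu. up sig) \<union> {mu}"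
  have fU: "finite U" unfolding U_def using finite_up finite_dn pm up_part dn_part by auto
  have Upart: "\<forall>rho\<in>U. is_partition rho" unfolding U_def using pm up_part dn_part by auto
  have "(\<Sum>lam\<in>up mu. ?f lam) = (\<Sum>lam\<in>up mu. \<Sum>rho\<in>dn lam. ?f rho)"
  proof (rule sum.cong[OF refl])
    fix lam assume l: "lam \<in> up mu"
    show "?f lam = (\<Sum>rho\<in>dn lam. ?f rho)" using SYT_rec'[OF up_part[OF l]] up_psize[OF l] by simp
  qed
  also have "\<dots> = (\<Sum>rho\<in>U. ?f rho * card {lam\<in>up mu. rho \<in> dn lam})"
    by (rule dsum[OF finite_up[OF pm] fU]) (auto simp: U_def)
  also have "\<dots> = (\<Sum>rho\<in>U. ?f rho * card (dn mu \<inter> dn rho) + (if rho = mu then ?f rho else 0))"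
  proof (rule sum.cong[OF refl])
    fix rho assume r: "rho \<in> U"
    have e: "{lam\<in>up mu. rho \<in> dn lam} = up mu \<inter> up rho" unfolding up_def dn_def by auto
    show "?f rho * card {lam\<in>up mu. rho \<in> dn lam} = ?f rho * card (dn mu \<inter> dn rho) + (if rho = mu then ?f rho else 0)"
    proof (cases "rho = mu")
      case True then show ?thesis unfolding e using card_up_dn[OF pm] by simp
    next
      case False then show ?thesis unfolding e using DU_off[OF pm _ ] Upart r by simp
    qed
  qed
  also have "\<dots> = (\<Sum>rho\<in>U. ?f rho * card (dn mu \<inter> dn rho)) + ?f mu"
    using fU by (simp add: sum.distrib U_def)
  also have "(\<Sum>rho\<in>U. ?f rho * card (dn mu \<inter> dn rho)) = (\<Sum>sig\<in>dn mu. \<Sum>rho\<in>up sig. ?f rho)"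
  proof -
    have e: "{sig\<in>dn mu. rho \<in> up sig} = dn mu \<inter> dn rho" for rho unfolding up_def dn_def by auto
    show ?thesis unfolding e[symmetric]
      by (rule dsum[OF finite_dn[OF pm] fU, symmetric]) (auto simp: U_def)
  qed
  also have "\<dots> = (\<Sum>sig\<in>dn mu. psize mu * ?f sig)"
  proof (rule sum.cong[OF refl])
    fix sig assume s: "sig \<in> dn mu"
    have "psize sig < psize mu" using dn_psize[OF s] by simp
    then show "(\<Sum>rho\<in>up sig. ?f rho) = psize mu * ?f sig" using less.hyps[OF _ dn_part[OF s]] dn_psize[OF s] by simp
  qed
  also have "\<dots> = psize mu * (\<Sum>sig\<in>dn mu. ?f sig)" by (simp add: sum_distrib_left)
  also have "\<dots> = psize mu * ?f mu" using SYT_rec'[OF pm] by simp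
  finally show ?case by simp
qed



definition gw :: "nat \<Rightarrow> nat \<Rightarrow> nat list \<Rightarrow> nat list \<Rightarrow> nat list list set" where
  "gw off m mu nu = {ls. length ls = Suc m \<and> (\<forall>l\<in>set ls. is_partition l) \<and> ls ! 0 = mu \<and> ls ! m = nu \<and>
       (\<forall>i<m. step_ok (off + i) (ls ! i) (ls ! Suc i))}"

definition succs :: "nat \<Rightarrow> nat list \<Rightarrow> nat list set" where
  "succs off mu = {x. is_partition x \<and> step_ok off mu x}"

definition preds :: "nat \<Rightarrow> nat list \<Rightarrow> nat list set" where
  "preds i nu = {x. is_partition x \<and> step_ok i x nu}"

fun cnt :: "nat \<Rightarrow> nat \<Rightarrow> nat list \<Rightarrow> nat list \<Rightarrow> nat" where
  "cnt off 0 mu nu = (if mu = nu \<and> is_partition mu then 1 else 0)"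
| "cnt off (Suc m) mu nu = (\<Sum>x\<in>succs off mu. cnt (Suc off) m x nu)"

lemma step_ok_part: "step_ok i a b \<Longrightarrow> is_partition a \<and> is_partition b \<or> a = b"
  unfolding step_ok_def covers_def by (auto split: if_splits)

lemma succs_eq: "is_partition mu \<Longrightarrow> succs off mu = (if off mod 3 = 2 then dn mu else insert mu (up mu))"
  unfolding succs_def step_ok_def up_def dn_def covers_def by auto

lemma succs_np: "\<not> is_partition mu \<Longrightarrow> succs off mu = {}"
  unfolding succs_def step_ok_def covers_def by auto

lemma preds_eq: "is_partition nu \<Longrightarrow> preds i nu = (if i mod 3 = 2 then up nu else insert nu (dn nu))"
  unfolding preds_def step_ok_def up_def dn_def covers_def by auto

lemma preds_np: "\<not> is_partition nu \<Longrightarrow> preds i nu = {}"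
  unfolding preds_def step_ok_def covers_def by auto

lemma finite_succs: "finite (succs off mu)"
  by (cases "is_partition mu") (auto simp: succs_eq succs_np finite_up finite_dn)

lemma finite_preds: "finite (preds off mu)"
  by (cases "is_partition mu") (auto simp: preds_eq preds_np finite_up finite_dn)

lemma gw0: "gw off 0 mu nu = (if mu = nu \<and> is_partition mu then {[mu]} else {})"
proof -
  have "ls \<in> gw off 0 mu nu \<longleftrightarrow> ls = [mu] \<and> mu = nu \<and> is_partition mu" for ls
  proof
    assume "ls \<in> gw off 0 mu nu"
    then have "length ls = 1" "\<forall>l\<in>set ls. is_partition l" "ls ! 0 = mu" "ls ! 0 = nu" unfolding gw_def by auto
    then show "ls = [mu] \<and> mu = nu \<and> is_partition mu" by (cases ls) auto
  qed (auto simp: gw_def)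
  then show ?thesis by auto
qed

lemma gw_Suc: "gw off (Suc m) mu nu = (\<Union>x\<in>succs off mu. (Cons mu) ` gw (Suc off) m x nu)"
proof (rule equalityI)
  show "gw off (Suc m) mu nu \<subseteq> (\<Union>x\<in>succs off mu. (Cons mu) ` gw (Suc off) m x nu)"
  proof
    fix ls assume "ls \<in> gw off (Suc m) mu nu"
    then have l: "length ls = Suc (Suc m)" and p: "\<forall>l\<in>set ls. is_partition l" and h: "ls ! 0 = mu"
      and e: "ls ! Suc m = nu" and s: "\<forall>i<Suc m. step_ok (off + i) (ls ! i) (ls ! Suc i)"
      unfolding gw_def by auto
    obtain a ls' where ls: "ls = a # ls'" using l by (cases ls) auto
    have a: "a = mu" using h ls by simp
    have l': "length ls' = Suc m" using l ls by simp
    define x where "x = ls' ! 0"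
    have px: "is_partition x" using p l' unfolding ls x_def by simp
    have sx: "step_ok off mu x" using s[rule_format, of 0] ls a x_def by simp
    have "ls' \<in> gw (Suc off) m x nu" unfolding gw_def
    proof (intro CollectI conjI)
      show "length ls' = Suc m" by (rule l')
      show "\<forall>l\<in>set ls'. is_partition l" using p ls by simp
      show "ls' ! 0 = x" by (simp add: x_def)
      show "ls' ! m = nu" using e ls by simp
      show "\<forall>i<m. step_ok (Suc off + i) (ls' ! i) (ls' ! Suc i)"
      proof (intro allI impI)
        fix i assume "i < m"
        then have "step_ok (off + Suc i) (ls ! Suc i) (ls ! Suc (Suc i))" using s[rule_format, of "Suc i"] by simp
        then show "step_ok (Suc off + i) (ls' ! i) (ls' ! Suc i)" using ls by simp
      qed
    qed
    moreover have "x \<in> succs off mu" unfolding succs_def using px sx by simp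
    ultimately show "ls \<in> (\<Union>x\<in>succs off mu. (Cons mu) ` gw (Suc off) m x nu)" using ls a by blast
  qed
next
  show "(\<Union>x\<in>succs off mu. (Cons mu) ` gw (Suc off) m x nu) \<subseteq> gw off (Suc m) mu nu"
  proof
    fix ls assume "ls \<in> (\<Union>x\<in>succs off mu. (Cons mu) ` gw (Suc off) m x nu)"
    then obtain x ls' where x: "x \<in> succs off mu" and l': "ls' \<in> gw (Suc off) m x nu" and ls: "ls = mu # ls'"
      by auto
    have px: "is_partition x" and sx: "step_ok off mu x" using x unfolding succs_def by auto
    have pm: "is_partition mu" using step_ok_part[OF sx] px by auto
    have len: "length ls' = Suc m" and p: "\<forall>l\<in>set ls'. is_partition l" and h: "ls' ! 0 = x"
      and e: "ls' ! m = nu" and s: "\<forall>i<m. step_ok (Suc off + i) (ls' ! i) (ls' ! Suc i)"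
      using l' unfolding gw_def by auto
    show "ls \<in> gw off (Suc m) mu nu" unfolding gw_def
    proof (intro CollectI conjI)
      show "length ls = Suc (Suc m)" using len ls by simp
      show "\<forall>l\<in>set ls. is_partition l" using p pm ls by simp
      show "ls ! 0 = mu" using ls by simp
      show "ls ! Suc m = nu" using ls e by simp
      show "\<forall>i<Suc m. step_ok (off + i) (ls ! i) (ls ! Suc i)"
      proof (intro allI impI)
        fix i assume i: "i < Suc m"
        show "step_ok (off + i) (ls ! i) (ls ! Suc i)"
        proof (cases i)
          case 0 then show ?thesis using sx h ls by simp
        next
          case (Suc j) then show ?thesis using s i ls by simp
        qed
      qed
    qed
  qed
qed

lemma card_gw: "finite (gw off m mu nu) \<and> card (gw off m mu nu) = cnt off m mu nu"
proof (induction m arbitrary: off mu)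
  case 0 then show ?case by (auto simp: gw0)
next
  case (Suc m)
  have fin: "finite (succs off mu)" by (rule finite_succs)
  have disj: "\<forall>x\<in>succs off mu. \<forall>y\<in>succs off mu. x \<noteq> y \<longrightarrow>
      (Cons mu) ` gw (Suc off) m x nu \<inter> (Cons mu) ` gw (Suc off) m y nu = {}"
  proof (intro ballI impI)
    fix x y :: "nat list" assume "x \<noteq> y"
    have h: "a \<in> gw (Suc off) m z nu \<Longrightarrow> a ! 0 = z" for a z unfolding gw_def by simp
    show "(Cons mu) ` gw (Suc off) m x nu \<inter> (Cons mu) ` gw (Suc off) m y nu = {}"
    proof (rule ccontr)
      assume "(Cons mu) ` gw (Suc off) m x nu \<inter> (Cons mu) ` gw (Suc off) m y nu \<noteq> {}"
      then obtain a b where "a \<in> gw (Suc off) m x nu" "b \<in> gw (Suc off) m y nu" "mu # a = mu # b" by blast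
      then show False using h \<open>x \<noteq> y\<close> by blast
    qed
  qed
  have injC: "inj_on (Cons mu) A" for A :: "nat list list set" by (rule inj_onI) simp
  have fin2: "\<forall>x\<in>succs off mu. finite ((Cons mu) ` gw (Suc off) m x nu)"
    using Suc.IH by blast
  have "card (gw off (Suc m) mu nu) = (\<Sum>x\<in>succs off mu. card ((Cons mu) ` gw (Suc off) m x nu))"
    unfolding gw_Suc by (rule card_UN_disjoint[OF fin fin2 disj])
  also have "\<dots> = (\<Sum>x\<in>succs off mu. cnt (Suc off) m x nu)"
  proof (rule sum.cong[OF refl])
    fix x assume "x \<in> succs off mu"
    show "card ((Cons mu) ` gw (Suc off) m x nu) = cnt (Suc off) m x nu"
      using card_image[OF injC] Suc.IH by metis
  qed
  finally have c: "card (gw off (Suc m) mu nu) = cnt off (Suc m) mu nu" by simp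
  have "finite (gw off (Suc m) mu nu)" unfolding gw_Suc using fin fin2 by blast
  then show ?case using c by blast
qed

lemma T_cnt: "T n mu nu = cnt 0 (3 * n) mu nu"
proof -
  have "walks n mu nu = gw 0 (3 * n) mu nu" unfolding walks_def gw_def by simp
  then show ?thesis unfolding T_def using card_gw by simp
qed

lemma step_ok_mod: "i mod 3 = j mod 3 \<Longrightarrow> step_ok i = step_ok j"
  unfolding step_ok_def by (simp add: fun_eq_iff)

lemma cnt_mod: "off mod 3 = off' mod 3 \<Longrightarrow> cnt off m mu nu = cnt off' m mu nu"
proof (induction m arbitrary: off off' mu)
  case 0 then show ?case by simp
next
  case (Suc m)
  have "succs off mu = succs off' mu" unfolding succs_def using step_ok_mod[OF Suc.prems] by simp
  moreover have "Suc off mod 3 = Suc off' mod 3" using Suc.prems by (simp add: mod_Suc)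
  ultimately show ?case using Suc.IH[of "Suc off" "Suc off'"] by simp
qed

lemma cnt_snoc: "cnt off (Suc m) mu nu = (\<Sum>x\<in>preds (off + m) nu. cnt off m mu x)"
proof (induction m arbitrary: off mu)
  case 0
  have l: "cnt off (Suc 0) mu nu = (if is_partition mu \<and> is_partition nu \<and> step_ok off mu nu then 1 else 0)"
  proof -
    have "cnt off (Suc 0) mu nu = (\<Sum>x\<in>succs off mu. cnt (Suc off) 0 x nu)" by simp
    also have "\<dots> = (\<Sum>x\<in>succs off mu. if x = nu then (if is_partition nu then 1 else 0) else 0)"
      by (rule sum.cong) auto
    also have "\<dots> = (if nu \<in> succs off mu then (if is_partition nu then 1 else 0) else 0)"
      by (rule sum.delta[OF finite_succs])
    moreover have "nu \<in> succs off mu \<and> is_partition nu \<longleftrightarrow> is_partition mu \<and> is_partition nu \<and> step_ok off mu nu"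
      unfolding succs_def using step_ok_part[of off mu nu] by blast
    ultimately show ?thesis by (simp split: if_splits)
  qed
  have r: "(\<Sum>x\<in>preds (off + 0) nu. cnt off 0 mu x) = (if is_partition mu \<and> is_partition nu \<and> step_ok off mu nu then 1 else 0)"
  proof -
    have "(\<Sum>x\<in>preds (off + 0) nu. cnt off 0 mu x) = (\<Sum>x\<in>preds off nu. if mu = x then (if is_partition mu then 1 else 0) else 0)"
      by (rule sum.cong) auto
    also have "\<dots> = (if mu \<in> preds off nu then (if is_partition mu then 1 else 0) else 0)"
      by (rule sum.delta'[OF finite_preds])
    moreover have "mu \<in> preds off nu \<and> is_partition mu \<longleftrightarrow> is_partition mu \<and> is_partition nu \<and> step_ok off mu nu"
      unfolding preds_def using step_ok_part[of off mu nu] by blast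
    ultimately show ?thesis by (simp split: if_splits)
  qed
  show ?case using l r by simp
next
  case (Suc m)
  have "cnt off (Suc (Suc m)) mu nu = (\<Sum>x\<in>succs off mu. cnt (Suc off) (Suc m) x nu)" by simp
  also have "\<dots> = (\<Sum>x\<in>succs off mu. \<Sum>y\<in>preds (Suc off + m) nu. cnt (Suc off) m x y)"
    using Suc.IH by simp
  also have "\<dots> = (\<Sum>y\<in>preds (Suc off + m) nu. \<Sum>x\<in>succs off mu. cnt (Suc off) m x y)"
    by (rule sum.swap)
  also have "\<dots> = (\<Sum>y\<in>preds (off + Suc m) nu. cnt off (Suc m) mu y)" by simp
  finally show ?case .
qed



fun dd :: "nat \<Rightarrow> nat \<Rightarrow> nat" where
  "dd 0 k = (if k = 0 then 1 else 0)"
| "dd (Suc n) k = (if k > 0 then dd n (k - 1) else 0) + 2 * (k + 1) * dd n k + (k + 1) * (k + 2) * dd n (k + 1)"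

fun ccf :: "nat \<Rightarrow> nat \<Rightarrow> nat" where
  "ccf 0 k = (if k = 0 then 1 else 0)"
| "ccf (Suc n) k = (k + 1) * (ccf n (k + 1) + 2 * ccf n k + (if k > 0 then ccf n (k - 1) else 0))"

lemma m2: "Suc (Suc (3 * n)) mod 3 = (2::nat)" by presburger
lemma m1: "Suc (3 * n) mod 3 = (1::nat)" by presburger
lemma m0: "(3 * n) mod 3 = (0::nat)" by presburger

lemma cnt_Suc: "cnt off (Suc m) mu nu = (\<Sum>x\<in>succs off mu. cnt (Suc off) m x nu)" by simp
declare cnt.simps(2)[simp del]

lemma base_case: "is_partition mu \<Longrightarrow> cnt 0 0 mu nu = (if mu = nu then 1 else 0)"
  by simp

lemma up_notin: "mu \<notin> up mu"
  using up_psize by fastforce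

lemma dn_notin: "mu \<notin> dn mu"
  using dn_psize by fastforce

lemma sum_up_const: assumes "is_partition x"
  shows "(\<Sum>y\<in>up x. c * num_SYT y) = c * (Suc (psize x) * num_SYT x)"
proof -
  have "(\<Sum>y\<in>up x. c * num_SYT y) = c * (\<Sum>y\<in>up x. num_SYT y)" by (rule sum_distrib_left[symmetric])
  then show ?thesis using up_sum[OF assms] by simp
qed

lemma sum_dn_const: assumes "is_partition x"
  shows "(\<Sum>y\<in>dn x. c * num_SYT y) = c * (if psize x = 0 then 0 else num_SYT x)"
proof -
  have "(\<Sum>y\<in>dn x. c * num_SYT y) = c * (\<Sum>y\<in>dn x. num_SYT y)" by (rule sum_distrib_left[symmetric])
  then show ?thesis using SYT_rec'[OF assms] by simp
qed

lemma backw: "is_partition mu \<Longrightarrow> cnt 0 (3 * n) mu [] = dd n (psize mu) * num_SYT mu"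
proof (induction n arbitrary: mu)
  case 0
  then show ?case using psize0[OF 0] SYT_nil by simp
next
  case (Suc n)
  let ?f = num_SYT
  define h where "h k = (if k > 0 then dd n (k - 1) else 0)" for k
  define e where "e k = h k + (k + 1) * h (k + 1)" for k
  have L3: "cnt 2 (Suc (3 * n)) y [] = h (psize y) * ?f y" if py: "is_partition y" for y
  proof -
    have "cnt 2 (Suc (3 * n)) y [] = (\<Sum>z\<in>dn y. cnt 3 (3 * n) z [])" unfolding cnt_Suc using succs_eq[OF py, of 2] by simp
    also have "\<dots> = (\<Sum>z\<in>dn y. dd n (psize y - 1) * ?f z)"
    proof (rule sum.cong[OF refl])
      fix z assume z: "z \<in> dn y"
      have "cnt 3 (3 * n) z [] = cnt 0 (3 * n) z []" by (rule cnt_mod) simp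
      then show "cnt 3 (3 * n) z [] = dd n (psize y - 1) * ?f z"
        using Suc.IH[OF dn_part[OF z]] dn_psize[OF z] by simp
    qed
    also have "\<dots> = h (psize y) * ?f y" using sum_dn_const[OF py] unfolding h_def by simp
    finally show ?thesis .
  qed
  have L2: "cnt 1 (Suc (Suc (3 * n))) x [] = e (psize x) * ?f x" if px: "is_partition x" for x
  proof -
    have "cnt 1 (Suc (Suc (3 * n))) x [] = (\<Sum>y\<in>insert x (up x). cnt 2 (Suc (3 * n)) y [])"
      unfolding cnt_Suc[of 1] using succs_eq[OF px, of 1] by (simp add: numeral_2_eq_2)
    also have "\<dots> = cnt 2 (Suc (3 * n)) x [] + (\<Sum>y\<in>up x. cnt 2 (Suc (3 * n)) y [])"
      using finite_up[OF px] up_notin by simp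
    also have "(\<Sum>y\<in>up x. cnt 2 (Suc (3 * n)) y []) = (\<Sum>y\<in>up x. h (Suc (psize x)) * ?f y)"
    proof (rule sum.cong[OF refl])
      fix y assume y: "y \<in> up x"
      show "cnt 2 (Suc (3 * n)) y [] = h (Suc (psize x)) * ?f y" using L3[OF up_part[OF y]] up_psize[OF y] by simp
    qed
    also have "\<dots> = h (Suc (psize x)) * (Suc (psize x) * ?f x)" by (rule sum_up_const[OF px])
    finally show ?thesis using L3[OF px] unfolding e_def by (simp add: algebra_simps)
  qed
  have e3: "3 * Suc n = Suc (Suc (Suc (3 * n)))" by simp
  have "cnt 0 (3 * Suc n) mu [] = cnt 0 (Suc (Suc (Suc (3 * n)))) mu []" by (simp only: e3)
  also have "\<dots> = (\<Sum>x\<in>insert mu (up mu). cnt 1 (Suc (Suc (3 * n))) x [])"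
    unfolding cnt_Suc[of 0] using succs_eq[OF Suc.prems, of 0] by simp
  also have "\<dots> = cnt 1 (Suc (Suc (3 * n))) mu [] + (\<Sum>x\<in>up mu. cnt 1 (Suc (Suc (3 * n))) x [])"
    using finite_up[OF Suc.prems] up_notin by simp
  also have "(\<Sum>x\<in>up mu. cnt 1 (Suc (Suc (3 * n))) x []) = (\<Sum>x\<in>up mu. e (Suc (psize mu)) * ?f x)"
  proof (rule sum.cong[OF refl])
    fix x assume x: "x \<in> up mu"
    show "cnt 1 (Suc (Suc (3 * n))) x [] = e (Suc (psize mu)) * ?f x" using L2[OF up_part[OF x]] up_psize[OF x] by simp
  qed
  also have "\<dots> = e (Suc (psize mu)) * (Suc (psize mu) * ?f mu)" by (rule sum_up_const[OF Suc.prems])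
  finally have "cnt 0 (3 * Suc n) mu [] = (e (psize mu) + Suc (psize mu) * e (Suc (psize mu))) * ?f mu"
    using L2[OF Suc.prems] by (simp add: algebra_simps)
  moreover have "e (psize mu) + Suc (psize mu) * e (Suc (psize mu)) = dd (Suc n) (psize mu)"
    unfolding e_def h_def by (simp add: algebra_simps)
  ultimately show ?case by simp
qed

lemma forw: "is_partition nu \<Longrightarrow> cnt 0 (3 * n) [] nu = ccf n (psize nu) * num_SYT nu"
proof (induction n arbitrary: nu)
  case 0
  then show ?case using psize0[OF 0] SYT_nil by auto
next
  case (Suc n)
  let ?f = num_SYT
  define ef where "ef k = ccf n k + (if k > 0 then ccf n (k - 1) else 0)" for k
  define Ef where "Ef k = ef k + (if k > 0 then ef (k - 1) else 0)" for k
  have L3: "cnt 0 (Suc (3 * n)) [] y = ef (psize y) * ?f y" if py: "is_partition y" for y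
  proof -
    have "cnt 0 (Suc (3 * n)) [] y = (\<Sum>z\<in>insert y (dn y). cnt 0 (3 * n) [] z)"
      using cnt_snoc[of 0 "3 * n" "[]" y] preds_eq[OF py, of "3 * n"] m0 by simp
    also have "\<dots> = cnt 0 (3 * n) [] y + (\<Sum>z\<in>dn y. cnt 0 (3 * n) [] z)"
      using finite_dn[OF py] dn_notin by simp
    also have "(\<Sum>z\<in>dn y. cnt 0 (3 * n) [] z) = (\<Sum>z\<in>dn y. ccf n (psize y - 1) * ?f z)"
    proof (rule sum.cong[OF refl])
      fix z assume z: "z \<in> dn y"
      show "cnt 0 (3 * n) [] z = ccf n (psize y - 1) * ?f z" using Suc.IH[OF dn_part[OF z]] dn_psize[OF z] by simp
    qed
    also have "\<dots> = ccf n (psize y - 1) * (if psize y = 0 then 0 else ?f y)" by (rule sum_dn_const[OF py])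
    finally show ?thesis using Suc.IH[OF py] unfolding ef_def by (simp add: algebra_simps)
  qed
  have L2: "cnt 0 (Suc (Suc (3 * n))) [] x = Ef (psize x) * ?f x" if px: "is_partition x" for x
  proof -
    have "cnt 0 (Suc (Suc (3 * n))) [] x = (\<Sum>y\<in>insert x (dn x). cnt 0 (Suc (3 * n)) [] y)"
      using cnt_snoc[of 0 "Suc (3 * n)" "[]" x] preds_eq[OF px, of "Suc (3 * n)"] m1 by simp
    also have "\<dots> = cnt 0 (Suc (3 * n)) [] x + (\<Sum>y\<in>dn x. cnt 0 (Suc (3 * n)) [] y)"
      using finite_dn[OF px] dn_notin by simp
    also have "(\<Sum>y\<in>dn x. cnt 0 (Suc (3 * n)) [] y) = (\<Sum>y\<in>dn x. ef (psize x - 1) * ?f y)"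
    proof (rule sum.cong[OF refl])
      fix y assume y: "y \<in> dn x"
      show "cnt 0 (Suc (3 * n)) [] y = ef (psize x - 1) * ?f y" using L3[OF dn_part[OF y]] dn_psize[OF y] by simp
    qed
    also have "\<dots> = ef (psize x - 1) * (if psize x = 0 then 0 else ?f x)" by (rule sum_dn_const[OF px])
    finally show ?thesis using L3[OF px] unfolding Ef_def by (simp add: algebra_simps)
  qed
  have p2: "preds (3 * n + 2) nu = up nu" using preds_eq[OF Suc.prems, of "3 * n + 2"] m2 by simp
  have e3: "3 * Suc n = Suc (3 * n + 2)" by simp
  have "cnt 0 (3 * Suc n) [] nu = cnt 0 (Suc (3 * n + 2)) [] nu" by (simp only: e3)
  also have "\<dots> = (\<Sum>x\<in>up nu. cnt 0 (Suc (Suc (3 * n))) [] x)"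
    using cnt_snoc[of 0 "3 * n + 2" "[]" nu] p2 by simp
  also have "\<dots> = (\<Sum>x\<in>up nu. Ef (Suc (psize nu)) * ?f x)"
  proof (rule sum.cong[OF refl])
    fix x assume x: "x \<in> up nu"
    show "cnt 0 (Suc (Suc (3 * n))) [] x = Ef (Suc (psize nu)) * ?f x" using L2[OF up_part[OF x]] up_psize[OF x] by simp
  qed
  also have "\<dots> = Ef (Suc (psize nu)) * (Suc (psize nu) * ?f nu)" by (rule sum_up_const[OF Suc.prems])
  also have "Ef (Suc (psize nu)) * (Suc (psize nu) * ?f nu) = ccf (Suc n) (psize nu) * ?f nu"
    unfolding Ef_def ef_def by (simp add: algebra_simps)
  finally show ?case .
qed

lemma binid: "Suc k * ((n choose Suc k) + 2 * (n choose k) + (if k > 0 then n choose (k - 1) else 0))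
    = Suc (Suc n) * (Suc n choose k)"
proof -
  have a: "Suc n choose k = (n choose k) + (if k > 0 then n choose (k - 1) else 0)"
    by (cases k) auto
  have b: "Suc (Suc n) choose Suc k = (Suc n choose k) + (Suc n choose Suc k)" by (rule binomial_Suc_Suc)
  have c: "Suc n choose Suc k = (n choose k) + (n choose Suc k)" by (rule binomial_Suc_Suc)
  have e: "(n choose Suc k) + 2 * (n choose k) + (if k > 0 then n choose (k - 1) else 0) = Suc (Suc n) choose Suc k"
    using a b c by linarith
  show ?thesis unfolding e by (rule Suc_times_binomial)
qed

lemma ccf_closed: "ccf n k = fact (Suc n) * (n choose k)"
proof (induction n arbitrary: k)
  case 0 then show ?case by simp
next
  case (Suc n)
  have "ccf (Suc n) k = fact (Suc n) * (Suc k * ((n choose Suc k) + 2 * (n choose k) + (if k > 0 then n choose (k - 1) else 0)))"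
    using Suc.IH by (simp add: algebra_simps)
  also have "\<dots> = fact (Suc n) * (Suc (Suc n) * (Suc n choose k))" by (simp only: binid)
  also have "\<dots> = fact (Suc (Suc n)) * (Suc n choose k)" by (simp del: binomial_Suc_Suc add: algebra_simps)
  finally show ?case .
qed

lemma dd_closed: "dd n k * fact (Suc k) = fact (Suc n) * (n choose k)"
proof (induction n arbitrary: k)
  case 0 then show ?case by simp
next
  case (Suc n)
  let ?F = "fact (Suc n) :: nat"
  have t1: "(if k > 0 then dd n (k - 1) else 0) * fact (Suc k) = Suc k * (?F * (if k > 0 then n choose (k - 1) else 0))"
  proof (cases k)
    case 0 then show ?thesis by simp
  next
    case (Suc j)
    have ih: "dd n j * fact (Suc j) = ?F * (n choose j)" by (rule Suc.IH)
    have f: "fact (Suc (Suc j)) = Suc (Suc j) * (fact (Suc j) :: nat)" by (simp only: fact_Suc[of "Suc j"] of_nat_id)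
    have "(if k > 0 then dd n (k - 1) else 0) * fact (Suc k) = dd n j * fact (Suc (Suc j))" using Suc by simp
    also have "\<dots> = Suc (Suc j) * (dd n j * fact (Suc j))" unfolding f by (simp only: mult.left_commute)
    also have "\<dots> = Suc k * (?F * (if k > 0 then n choose (k - 1) else 0))" unfolding ih using Suc by simp
    finally show ?thesis .
  qed
  have t2: "2 * (k + 1) * dd n k * fact (Suc k) = Suc k * (?F * (2 * (n choose k)))"
    using Suc.IH[of k] by (simp add: algebra_simps)
  have t3: "(k + 1) * (k + 2) * dd n (k + 1) * fact (Suc k) = Suc k * (?F * (n choose Suc k))"
  proof -
    have ih: "dd n (Suc k) * fact (Suc (Suc k)) = ?F * (n choose Suc k)" by (rule Suc.IH)
    have f: "fact (Suc (Suc k)) = Suc (Suc k) * (fact (Suc k) :: nat)" by (simp only: fact_Suc[of "Suc k"] of_nat_id)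
    have "(k + 1) * (k + 2) * dd n (k + 1) * fact (Suc k) = Suc k * (dd n (Suc k) * (Suc (Suc k) * fact (Suc k)))"
      by (simp del: fact_Suc add: algebra_simps)
    also have "\<dots> = Suc k * (?F * (n choose Suc k))" unfolding f[symmetric] ih ..
    finally show ?thesis .
  qed
  have "dd (Suc n) k * fact (Suc k) = (if k > 0 then dd n (k - 1) else 0) * fact (Suc k)
      + 2 * (k + 1) * dd n k * fact (Suc k) + (k + 1) * (k + 2) * dd n (k + 1) * fact (Suc k)"
    by (simp add: algebra_simps)
  also have "\<dots> = ?F * (Suc k * ((n choose Suc k) + 2 * (n choose k) + (if k > 0 then n choose (k - 1) else 0)))"
    unfolding t1 t2 t3 by (simp add: algebra_simps)
  also have "\<dots> = ?F * (Suc (Suc n) * (Suc n choose k))" by (simp only: binid)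
  also have "\<dots> = fact (Suc (Suc n)) * (Suc n choose k)" by (simp del: binomial_Suc_Suc add: algebra_simps)
  finally show ?case .
qed



theorem mainTheorem11:
  fixes n k :: nat and lam :: "nat list"
  assumes "is_partition lam" and "psize lam = k"
  shows "T n [] lam = fact (n + 1) * (n choose k) * num_SYT lam
     \<and> real (T n lam []) = real (fact (n + 1)) / real (fact (k + 1)) * real (n choose k) * real (num_SYT lam)"
proof
  show "T n [] lam = fact (n + 1) * (n choose k) * num_SYT lam"
    using T_cnt[of n "[]" lam] forw[OF assms(1), of n] ccf_closed[of n k] assms(2) by simp
  have t: "T n lam [] = dd n k * num_SYT lam" using T_cnt[of n lam "[]"] backw[OF assms(1), of n] assms(2) by simp
  have d: "real (dd n k) * real (fact (Suc k)) = real (fact (Suc n)) * real (n choose k)"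
    using dd_closed[of n k] by (metis of_nat_mult)
  have fz: "real (fact (Suc k) :: nat) \<noteq> 0" 
  proof -
    have "(fact (Suc k) :: nat) \<noteq> 0" by (rule fact_nonzero)
    then show ?thesis by (simp del: fact_Suc of_nat_fact)
  qed
  have "real (dd n k) = real (fact (Suc n)) / real (fact (Suc k)) * real (n choose k)"
    using d fz by (simp del: fact_Suc of_nat_fact add: field_simps)
  then show "real (T n lam []) = real (fact (n + 1)) / real (fact (k + 1)) * real (n choose k) * real (num_SYT lam)"
    unfolding t by simp
qed

end
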